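(* With the matrices defined in the context, the Neumann Schur complement $S_N:=\mathbf{B}\mathbf{A_N}^{-1}\mathbf{B}^T$ satisfies $S_N^\dagger=S_N$.
   Context: Fix an integer $n\ge 2$ and set $h=1/n$. Let $I_m$ denote the $m\times m$ identity matrix and $\otimes$ the Kronecker product. Let $\mathrm{B}\in\mathbb{R}^{n\times(n-1)}$ be $\mathrm{B}=\frac1h M$, where $M_{i,i}=1$ and $M_{i+1,i}=-1$ for $1\le i\le n-1$, all other entries $0$. Define $\mathrm{B}^u_x=I_n\otimes \mathrm{B}$, $\mathrm{B}^v_y=\mathrm{B}\otimes I_n$, $\mathrm{B}^q_x=I_{n-1}\otimes\mathrm{B}$, $\mathrm{B}^q_y=\mathrm{B}\otimes I_{n-1}$. Let $\mathbf{B}=\begin{bmatrix}-\mathrm{B}^u_x & -\mathrm{B}^v_y\end{bmatrix}\in\mathbb{R}^{n^2\times 2n(n-1)}$ and $\mathbf{C}=\begin{bmatrix}-(\mathrm{B}^q_y)^T & (\mathrm{B}^q_x)^T\end{bmatrix}\in\mathbb{R}^{(n-1)^2\times 2n(n-1)}$, and let $\mathbf{A_N}=\mathbf{B}^T\mathbf{B}+\mathbf{C}^T\mathbf{C}$ (which is invertible). The superscript $\dagger$ denotes the Moore–Penrose pseudoinverse. *)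

theory Defs
  imports "Jordan_Normal_Form.Matrix"
begin

definition kron :: "real mat \<Rightarrow> real mat \<Rightarrow> real mat" where
  "kron A B = mat (dim_row A * dim_row B) (dim_col A * dim_col B)
     (\<lambda>(i,j). A $$ (i div dim_row B, j div dim_col B) * B $$ (i mod dim_row B, j mod dim_col B))"

definition hcat :: "real mat \<Rightarrow> real mat \<Rightarrow> real mat" where
  "hcat A B = mat (dim_row A) (dim_col A + dim_col B)
     (\<lambda>(i,j). if j < dim_col A then A $$ (i,j) else B $$ (i, j - dim_col A))"

definition Mmat :: "nat \<Rightarrow> real mat" where
  "Mmat n = mat n (n - 1) (\<lambda>(i,j). if i = j then 1 else if i = j + 1 then -1 else 0)"

(* B = (1/h) M with h = 1/n *)
definition Bmat :: "nat \<Rightarrow> real mat" where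
  "Bmat n = (1 / (1 / real n)) \<cdot>\<^sub>m Mmat n"

definition Bux :: "nat \<Rightarrow> real mat" where "Bux n = kron (1\<^sub>m n) (Bmat n)"
definition Bvy :: "nat \<Rightarrow> real mat" where "Bvy n = kron (Bmat n) (1\<^sub>m n)"
definition Bqx :: "nat \<Rightarrow> real mat" where "Bqx n = kron (1\<^sub>m (n - 1)) (Bmat n)"
definition Bqy :: "nat \<Rightarrow> real mat" where "Bqy n = kron (Bmat n) (1\<^sub>m (n - 1))"

definition BB :: "nat \<Rightarrow> real mat" where
  "BB n = hcat (- Bux n) (- Bvy n)"

definition CC :: "nat \<Rightarrow> real mat" where
  "CC n = hcat (- (transpose_mat (Bqy n))) (transpose_mat (Bqx n))"

definition AN :: "nat \<Rightarrow> real mat" where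
  "AN n = transpose_mat (BB n) * BB n + transpose_mat (CC n) * CC n"

definition mat_inv :: "real mat \<Rightarrow> real mat" where
  "mat_inv A = (THE X. X \<in> carrier_mat (dim_row A) (dim_row A) \<and>
                      A * X = 1\<^sub>m (dim_row A) \<and> X * A = 1\<^sub>m (dim_row A))"

definition is_pinv :: "real mat \<Rightarrow> real mat \<Rightarrow> bool" where
  "is_pinv A X \<longleftrightarrow> X \<in> carrier_mat (dim_col A) (dim_row A) \<and>
     A * X * A = A \<and> X * A * X = X \<and>
     transpose_mat (A * X) = A * X \<and> transpose_mat (X * A) = X * A"

definition pinv :: "real mat \<Rightarrow> real mat" where
  "pinv A = (THE X. is_pinv A X)"

definition SN :: "nat \<Rightarrow> real mat" where
  "SN n = BB n * mat_inv (AN n) * transpose_mat (BB n)"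

end

theory Submission
  imports Defs "Jordan_Normal_Form.Determinant"
begin


lemma sum_prod_index:
  "(\<Sum>k\<in>{0..<m*p}. f k) = (\<Sum>a<m. \<Sum>b<p. f (a*p+b::nat))"
proof (induction m)
  case 0 then show ?case by simp
next
  case (Suc m)
  have "(\<Sum>k\<in>{0..<Suc m*p}. f k) = (\<Sum>k\<in>{0..<m*p}. f k) + (\<Sum>k\<in>{m*p..<m*p+p}. f k)"
    by (simp add: add.commute sum.atLeastLessThan_concat)
  also have "(\<Sum>k\<in>{m*p..<m*p+p}. f k) = (\<Sum>b<p. f (m*p+b))"
    by (simp add: sum.atLeastLessThan_shift_0[of f] atLeast0LessThan o_def)
  finally show ?case using Suc by simp
qed

lemma kron_carrier[simp]: "kron A B \<in> carrier_mat (dim_row A * dim_row B) (dim_col A * dim_col B)"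
  and dim_kron[simp]: "dim_row (kron A B) = dim_row A * dim_row B" "dim_col (kron A B) = dim_col A * dim_col B"
  by (auto simp: kron_def)

lemma index_kron: "i < dim_row A * dim_row B \<Longrightarrow> j < dim_col A * dim_col B \<Longrightarrow>
  kron A B $$ (i,j) = A $$ (i div dim_row B, j div dim_col B) * B $$ (i mod dim_row B, j mod dim_col B)"
  by (simp add: kron_def)

lemma kron_mult:
  assumes A: "A \<in> carrier_mat ra ca" and B: "B \<in> carrier_mat rb cb"
    and C: "C \<in> carrier_mat ca cc" and D: "D \<in> carrier_mat cb cd"
  shows "kron A B * kron C D = kron (A * C) (B * D)"
proof (rule eq_matI)
  fix i j assume i: "i < dim_row (kron (A * C) (B * D))" and j: "j < dim_col (kron (A * C) (B * D))"
  from i j A B C D have i': "i < ra * rb" and j': "j < cc * cd" by auto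
  have rb: "rb > 0" using i' by (cases "rb = 0") auto
  have cd: "cd > 0" using j' by (cases "cd = 0") auto
  have id: "i div rb < ra" "i mod rb < rb" "j div cd < cc" "j mod cd < cd"
    using i' j' rb cd by (auto simp: less_mult_imp_div_less)
  have dims: "dim_row A = ra" "dim_col A = ca" "dim_row B = rb" "dim_col B = cb"
     "dim_row C = ca" "dim_col C = cc" "dim_row D = cb" "dim_col D = cd" using A B C D by auto
  have "(kron A B * kron C D) $$ (i,j) = (\<Sum>k\<in>{0..<ca*cb}. kron A B $$ (i,k) * kron C D $$ (k,j))"
    using i' j' by (simp add: dims scalar_prod_def)
  also have "\<dots> = (\<Sum>k\<in>{0..<ca*cb}. (A $$ (i div rb, k div cb) * B $$ (i mod rb, k mod cb))
       * (C $$ (k div cb, j div cd) * D $$ (k mod cb, j mod cd)))"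
    by (rule sum.cong[OF refl], subst (1 2) index_kron, use i' j' in \<open>auto simp: dims\<close>)
  also have "\<dots> = (\<Sum>a<ca. \<Sum>b<cb. (A $$ (i div rb, a) * B $$ (i mod rb, b))
       * (C $$ (a, j div cd) * D $$ (b, j mod cd)))"
    unfolding sum_prod_index by (intro sum.cong refl, auto)
  also have "\<dots> = (\<Sum>a<ca. A $$ (i div rb, a) * C $$ (a, j div cd)) * (\<Sum>b<cb. B $$ (i mod rb, b) * D $$ (b, j mod cd))"
    by (simp add: sum_product mult_ac)
  also have "\<dots> = (A * C) $$ (i div rb, j div cd) * (B * D) $$ (i mod rb, j mod cd)"
    using id by (simp add: dims scalar_prod_def atLeast0LessThan)
  also have "\<dots> = kron (A * C) (B * D) $$ (i,j)"
    by (subst index_kron, use i' j' in \<open>auto simp: dims\<close>)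
  finally show "(kron A B * kron C D) $$ (i,j) = kron (A * C) (B * D) $$ (i,j)" .
qed (insert A B C D, auto)

lemma kron_transpose: "transpose_mat (kron A B) = kron (transpose_mat A) (transpose_mat B)"
proof (rule eq_matI)
  fix i j assume "i < dim_row (kron (transpose_mat A) (transpose_mat B))" "j < dim_col (kron (transpose_mat A) (transpose_mat B))"
  then have i: "i < dim_col A * dim_col B" and j: "j < dim_row A * dim_row B" by auto
  have p: "dim_col B > 0" using i by (cases "dim_col B = 0") auto
  have q: "dim_row B > 0" using j by (cases "dim_row B = 0") auto
  have b: "i div dim_col B < dim_col A" "i mod dim_col B < dim_col B" "j div dim_row B < dim_row A" "j mod dim_row B < dim_row B"
    using i j p q by (auto simp: less_mult_imp_div_less)
  show "transpose_mat (kron A B) $$ (i, j) = kron (transpose_mat A) (transpose_mat B) $$ (i, j)"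
    using i j b by (simp add: index_kron)
qed auto


lemma kron_one: "kron (1\<^sub>m p) (1\<^sub>m q) = 1\<^sub>m (p*q)"
proof (rule eq_matI)
  fix i j assume "i < dim_row (1\<^sub>m (p * q))" "j < dim_col (1\<^sub>m (p * q))"
  then have i: "i < p*q" and j: "j < p*q" by auto
  have q: "q > 0" using i by (cases "q = 0") auto
  have b: "i div q < p" "i mod q < q" "j div q < p" "j mod q < q"
    using i j q by (auto simp: less_mult_imp_div_less)
  have "(i div q = j div q \<and> i mod q = j mod q) = (i = j)"
    by (metis div_mult_mod_eq)
  then show "kron (1\<^sub>m p) (1\<^sub>m q) $$ (i, j) = 1\<^sub>m (p * q) $$ (i, j)"
    using i j b by (subst index_kron) auto
qed auto

lemma hcat_carrier[simp]: "dim_row (hcat A B) = dim_row A" "dim_col (hcat A B) = dim_col A + dim_col B"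
  by (auto simp: hcat_def)

lemma hcat_mult_transpose:
  assumes A: "A \<in> carrier_mat r ca" and B: "B \<in> carrier_mat r cb"
    and C: "C \<in> carrier_mat s ca" and D: "D \<in> carrier_mat s cb"
  shows "hcat A B * transpose_mat (hcat C D) = A * transpose_mat C + B * transpose_mat D"
proof (rule eq_matI)
  fix i j assume "i < dim_row (A * transpose_mat C + B * transpose_mat D)" "j < dim_col (A * transpose_mat C + B * transpose_mat D)"
  then have i: "i < r" and j: "j < s" using A B C D by auto
  have "(hcat A B * transpose_mat (hcat C D)) $$ (i,j) = (\<Sum>k\<in>{0..<ca+cb}. hcat A B $$ (i,k) * hcat C D $$ (j,k))"
    using i j A B C D by (simp add: scalar_prod_def)
  also have "\<dots> = (\<Sum>k\<in>{0..<ca}. hcat A B $$ (i,k) * hcat C D $$ (j,k)) + (\<Sum>k\<in>{ca..<ca+cb}. hcat A B $$ (i,k) * hcat C D $$ (j,k))"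
    by (simp add: sum.atLeastLessThan_concat)
  also have "(\<Sum>k\<in>{0..<ca}. hcat A B $$ (i,k) * hcat C D $$ (j,k)) = (\<Sum>k\<in>{0..<ca}. A $$ (i,k) * C $$ (j,k))"
    using i j A B C D by (intro sum.cong refl, auto simp: hcat_def)
  also have "(\<Sum>k\<in>{ca..<ca+cb}. hcat A B $$ (i,k) * hcat C D $$ (j,k)) = (\<Sum>k\<in>{0..<cb}. B $$ (i,k) * D $$ (j,k))"
    using i j A B C D by (subst sum.atLeastLessThan_shift_0, intro sum.cong refl, auto simp: hcat_def)
  also have "(\<Sum>k\<in>{0..<ca}. A $$ (i,k) * C $$ (j,k)) + (\<Sum>k\<in>{0..<cb}. B $$ (i,k) * D $$ (j,k))
     = (A * transpose_mat C + B * transpose_mat D) $$ (i,j)"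
    using i j A B C D by (simp add: scalar_prod_def)
  finally show "(hcat A B * transpose_mat (hcat C D)) $$ (i,j) = (A * transpose_mat C + B * transpose_mat D) $$ (i,j)" .
qed (insert A B C D, auto)

lemma hcat_mult_vec:
  assumes A: "A \<in> carrier_mat r ca" and B: "B \<in> carrier_mat r cb" and v: "v \<in> carrier_vec (ca+cb)"
  shows "hcat A B *\<^sub>v v = A *\<^sub>v vec_first v ca + B *\<^sub>v vec_last v cb"
proof (rule eq_vecI)
  fix i assume "i < dim_vec (A *\<^sub>v vec_first v ca + B *\<^sub>v vec_last v cb)"
  then have i: "i < r" using A B by auto
  have "(hcat A B *\<^sub>v v) $ i = (\<Sum>k\<in>{0..<ca+cb}. hcat A B $$ (i,k) * v $ k)"
    using i A B v by (simp add: scalar_prod_def mult_mat_vec_def)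
  also have "\<dots> = (\<Sum>k\<in>{0..<ca}. hcat A B $$ (i,k) * v $ k) + (\<Sum>k\<in>{ca..<ca+cb}. hcat A B $$ (i,k) * v $ k)"
    by (simp add: sum.atLeastLessThan_concat)
  also have "(\<Sum>k\<in>{0..<ca}. hcat A B $$ (i,k) * v $ k) = (\<Sum>k\<in>{0..<ca}. A $$ (i,k) * vec_first v ca $ k)"
    using i A B v by (intro sum.cong refl, auto simp: hcat_def vec_first_def)
  also have "(\<Sum>k\<in>{ca..<ca+cb}. hcat A B $$ (i,k) * v $ k) = (\<Sum>k\<in>{0..<cb}. B $$ (i,k) * vec_last v cb $ k)"
    using i A B v by (subst sum.atLeastLessThan_shift_0, intro sum.cong refl, auto simp: hcat_def vec_last_def)
  also have "(\<Sum>k\<in>{0..<ca}. A $$ (i,k) * vec_first v ca $ k) + (\<Sum>k\<in>{0..<cb}. B $$ (i,k) * vec_last v cb $ k)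
     = (A *\<^sub>v vec_first v ca + B *\<^sub>v vec_last v cb) $ i"
    using i A B v by (simp add: scalar_prod_def mult_mat_vec_def)
  finally show "(hcat A B *\<^sub>v v) $ i = (A *\<^sub>v vec_first v ca + B *\<^sub>v vec_last v cb) $ i" .
qed (insert A B, auto)

lemma Bmat_carrier: "Bmat n \<in> carrier_mat n (n-1)"
  by (simp add: Bmat_def Mmat_def)

lemma Bmat_index: "i < n \<Longrightarrow> j < n - 1 \<Longrightarrow> Bmat n $$ (i,j) = real n * (if i = j then 1 else if i = j + 1 then -1 else 0)"
  by (simp add: Bmat_def Mmat_def)

definition Lm :: "nat \<Rightarrow> real mat" where
  "Lm n = mat (n-1) n (\<lambda>(j,i). if i \<le> j then 1 / real n else 0)"

lemma Lm_carrier: "Lm n \<in> carrier_mat (n-1) n" by (simp add: Lm_def)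

lemma Lm_Bmat: "Lm n * Bmat n = 1\<^sub>m (n-1)"
proof (rule eq_matI)
  fix j c assume "j < dim_row (1\<^sub>m (n - 1))" "c < dim_col (1\<^sub>m (n - 1))"
  then have j: "j < n - 1" and c: "c < n - 1" by auto
  then have n: "n > 0" by auto
  have "(Lm n * Bmat n) $$ (j,c) = (\<Sum>i\<in>{0..<n}. Lm n $$ (j,i) * Bmat n $$ (i,c))"
    using j c Lm_carrier[of n] Bmat_carrier[of n] by (simp add: scalar_prod_def)
  also have "\<dots> = (\<Sum>i\<in>{0..<n}. (if c \<le> j then 1 else 0) * (if i = c then 1 else 0) + (if c + 1 \<le> j then -1 else 0) * (if i = c + 1 then 1 else 0))"
    using j c n by (intro sum.cong refl, auto simp: Lm_def Bmat_index)
  also have "\<dots> = (if c \<le> j then 1 else 0) * (\<Sum>i\<in>{0..<n}. if i = c then 1 else 0) + (if c + 1 \<le> j then -1 else 0) * (\<Sum>i\<in>{0..<n}. if i = c + 1 then 1 else 0)"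
    by (simp only: sum.distrib sum_distrib_left)
  also have "\<dots> = (if c \<le> j then 1 else 0) + (if c + 1 \<le> j then -1 else 0)"
    using c by simp
  also have "\<dots> = 1\<^sub>m (n - 1) $$ (j,c)" using j c by auto
  finally show "(Lm n * Bmat n) $$ (j,c) = 1\<^sub>m (n - 1) $$ (j,c)" .
qed (auto simp: Lm_def Bmat_def Mmat_def)

lemma vec_self_nonneg: "(v :: real vec) \<bullet> v \<ge> 0"
  unfolding scalar_prod_def by (intro sum_nonneg) auto

lemma vec_self_zero: assumes "(v :: real vec) \<bullet> v = 0" shows "v = 0\<^sub>v (dim_vec v)"
proof (rule eq_vecI)
  fix i assume "i < dim_vec (0\<^sub>v (dim_vec v))"
  then have i: "i \<in> {0..<dim_vec v}" by auto
  have "\<forall>k\<in>{0..<dim_vec v}. v $ k * v $ k = 0"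
    using assms unfolding scalar_prod_def by (subst sum_nonneg_eq_0_iff[symmetric]) auto
  with i show "v $ i = 0\<^sub>v (dim_vec v) $ i" by auto
qed auto



lemma mat_TT_zero: assumes M: "(M :: real mat) \<in> carrier_mat a b" and Z: "transpose_mat M * M = 0\<^sub>m b b"
  shows "M = 0\<^sub>m a b"
proof (rule eq_matI)
  fix i j assume "i < dim_row (0\<^sub>m a b)" "j < dim_col (0\<^sub>m a b)"
  then have i: "i < a" and j: "j < b" by auto
  have "(transpose_mat M * M) $$ (j,j) = col M j \<bullet> col M j" using M j by simp
  then have "col M j \<bullet> col M j = 0" using Z j by simp
  then have "col M j = 0\<^sub>v a" using vec_self_zero[of "col M j"] M j by simp
  then have "col M j $ i = 0" using i by simp
  then show "M $$ (i,j) = 0\<^sub>m a b $$ (i,j)" using M i j by simp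
qed (insert M, auto)


lemma pinv_unique:
  assumes X: "is_pinv A X" and Y: "is_pinv A Y"
  shows "X = Y"
proof -
  define r c where "r = dim_row A" and "c = dim_col A"
  have A: "A \<in> carrier_mat r c" unfolding r_def c_def by auto
  have Xc: "X \<in> carrier_mat c r" and X1: "A * X * A = A" and X2: "X * A * X = X"
    and X3: "transpose_mat (A * X) = A * X" and X4: "transpose_mat (X * A) = X * A"
    using X unfolding is_pinv_def r_def c_def by auto
  have Yc: "Y \<in> carrier_mat c r" and Y1: "A * Y * A = A" and Y2: "Y * A * Y = Y"
    and Y3: "transpose_mat (A * Y) = A * Y" and Y4: "transpose_mat (Y * A) = Y * A"
    using Y unfolding is_pinv_def r_def c_def by auto
  have At: "transpose_mat A \<in> carrier_mat c r" using A by simp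
  have Xt: "transpose_mat X \<in> carrier_mat r c" using Xc by simp
  have Yt: "transpose_mat Y \<in> carrier_mat r c" using Yc by simp
  have AX: "A * X \<in> carrier_mat r r" using A Xc by simp
  have AY: "A * Y \<in> carrier_mat r r" using A Yc by simp
  have XA: "X * A \<in> carrier_mat c c" using A Xc by simp
  have YA: "Y * A \<in> carrier_mat c c" using A Yc by simp
  have h1: "transpose_mat X * transpose_mat A = A * X"
    using X3 transpose_mult[OF A Xc] by simp
  have h2: "transpose_mat A = transpose_mat A * (A * Y)"
  proof -
    have "transpose_mat A = transpose_mat (A * Y * A)" using Y1 by simp
    also have "\<dots> = transpose_mat A * transpose_mat (A * Y)" using transpose_mult[OF AY A] .
    finally show ?thesis using Y3 by simp
  qed
  have h3: "transpose_mat A * transpose_mat Y = Y * A"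
    using Y4 transpose_mult[OF Yc A] by simp
  have h4: "transpose_mat A = (X * A) * transpose_mat A"
  proof -
    have "transpose_mat A = transpose_mat (A * (X * A))" using X1 assoc_mult_mat[OF A Xc A] by simp
    also have "\<dots> = transpose_mat (X * A) * transpose_mat A" using transpose_mult[OF A XA] .
    finally show ?thesis using X4 by simp
  qed
  have "X = X * (A * X)" using X2 assoc_mult_mat[OF Xc A Xc] by simp
  also have "\<dots> = X * (transpose_mat X * transpose_mat A)" using h1 by simp
  also have "\<dots> = X * (transpose_mat X * (transpose_mat A * (A * Y)))" using h2 by simp
  also have "\<dots> = X * ((transpose_mat X * transpose_mat A) * (A * Y))" using assoc_mult_mat[OF Xt At AY] by simp
  also have "\<dots> = X * ((A * X) * (A * Y))" using h1 by simp
  also have "\<dots> = (X * (A * X)) * (A * Y)" using assoc_mult_mat[OF Xc AX AY] by simp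
  also have "\<dots> = X * (A * Y)" using X2 assoc_mult_mat[OF Xc A Xc] by simp
  finally have eX: "X = X * (A * Y)" .
  have "Y = (Y * A) * Y" using Y2 by simp
  also have "\<dots> = (transpose_mat A * transpose_mat Y) * Y" using h3 by simp
  also have "\<dots> = (((X * A) * transpose_mat A) * transpose_mat Y) * Y" using h4 by simp
  also have "\<dots> = ((X * A) * (transpose_mat A * transpose_mat Y)) * Y" using assoc_mult_mat[OF XA At Yt] by simp
  also have "\<dots> = ((X * A) * (Y * A)) * Y" using h3 by simp
  also have "\<dots> = (X * A) * ((Y * A) * Y)" using assoc_mult_mat[OF XA YA Yc] by simp
  also have "\<dots> = X * (A * Y)" using Y2 assoc_mult_mat[OF Xc A Yc] by simp
  finally have eY: "Y = X * (A * Y)" .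
  show ?thesis using eX eY by simp
qed


lemma abstract_main:
  fixes Bm Cm :: "real mat"
  assumes Bm: "Bm \<in> carrier_mat r N" and Cm: "Cm \<in> carrier_mat s N"
    and BC: "Bm * transpose_mat Cm = 0\<^sub>m r s"
    and inj: "\<And>v. v \<in> carrier_vec N \<Longrightarrow> Bm *\<^sub>v v = 0\<^sub>v r \<Longrightarrow> Cm *\<^sub>v v = 0\<^sub>v s \<Longrightarrow> v = 0\<^sub>v N"
  shows "pinv (Bm * mat_inv (transpose_mat Bm * Bm + transpose_mat Cm * Cm) * transpose_mat Bm)
       = Bm * mat_inv (transpose_mat Bm * Bm + transpose_mat Cm * Cm) * transpose_mat Bm"
proof -
  define Bt Ct where "Bt = transpose_mat Bm" and "Ct = transpose_mat Cm"
  define A where "A = Bt * Bm + Ct * Cm"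
  have Bt: "Bt \<in> carrier_mat N r" and Ct: "Ct \<in> carrier_mat N s" using Bm Cm by (auto simp: Bt_def Ct_def)
  have BtB: "Bt * Bm \<in> carrier_mat N N" and CtC: "Ct * Cm \<in> carrier_mat N N" using Bt Bm Ct Cm by auto
  have A: "A \<in> carrier_mat N N" using BtB CtC by (simp add: A_def)
  have detA: "det A \<noteq> 0"
  proof
    assume "det A = 0"
    then obtain v where v: "v \<in> carrier_vec N" "v \<noteq> 0\<^sub>v N" and Av: "A *\<^sub>v v = 0\<^sub>v N"
      using det_0_iff_vec_prod_zero[OF A] by auto
    define bv cv where "bv = Bm *\<^sub>v v" and "cv = Cm *\<^sub>v v"
    have bv: "bv \<in> carrier_vec r" and cv: "cv \<in> carrier_vec s" using Bm Cm v by (auto simp: bv_def cv_def)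
    have eq: "A *\<^sub>v v = Bt *\<^sub>v bv + Ct *\<^sub>v cv"
      unfolding A_def bv_def cv_def using add_mult_distrib_mat_vec[OF BtB CtC v(1)]
        assoc_mult_mat_vec[OF Bt Bm v(1)] assoc_mult_mat_vec[OF Ct Cm v(1)] by simp
    have "0 = v \<bullet> (A *\<^sub>v v)" using Av v by simp
    also have "\<dots> = v \<bullet> (Bt *\<^sub>v bv + Ct *\<^sub>v cv)" using eq by simp
    also have "\<dots> = v \<bullet> (Bt *\<^sub>v bv) + v \<bullet> (Ct *\<^sub>v cv)"
      by (rule scalar_prod_add_distrib[OF v(1)], insert Bt Ct bv cv, auto)
    also have "v \<bullet> (Bt *\<^sub>v bv) = (Bt *\<^sub>v bv) \<bullet> v" by (rule comm_scalar_prod[OF v(1)], insert Bt bv, auto)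
    also have "\<dots> = bv \<bullet> bv" unfolding Bt_def using transpose_vec_mult_scalar[OF Bm v(1) bv] by (simp add: bv_def)
    also have "v \<bullet> (Ct *\<^sub>v cv) = (Ct *\<^sub>v cv) \<bullet> v" by (rule comm_scalar_prod[OF v(1)], insert Ct cv, auto)
    also have "\<dots> = cv \<bullet> cv" unfolding Ct_def using transpose_vec_mult_scalar[OF Cm v(1) cv] by (simp add: cv_def)
    finally have "bv \<bullet> bv + cv \<bullet> cv = 0" by simp
    then have "bv \<bullet> bv = 0" "cv \<bullet> cv = 0" using vec_self_nonneg[of bv] vec_self_nonneg[of cv] by linarith+
    then have "bv = 0\<^sub>v r" "cv = 0\<^sub>v s" using vec_self_zero[of bv] vec_self_zero[of cv] bv cv by auto
    then have "v = 0\<^sub>v N" using inj[OF v(1)] by (simp add: bv_def cv_def)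
    with v(2) show False by simp
  qed
  from det_non_zero_imp_unit[OF A detA, of "()"]
  obtain Ai where Ai: "Ai \<in> carrier_mat N N" and AiA: "Ai * A = 1\<^sub>m N" and AAi: "A * Ai = 1\<^sub>m N"
    unfolding Units_def ring_mat_def by auto
  have inv: "mat_inv A = Ai"
    unfolding mat_inv_def
  proof (rule the_equality)
    show "Ai \<in> carrier_mat (dim_row A) (dim_row A) \<and> A * Ai = 1\<^sub>m (dim_row A) \<and> Ai * A = 1\<^sub>m (dim_row A)"
      using A Ai AiA AAi by simp
  next
    fix X assume "X \<in> carrier_mat (dim_row A) (dim_row A) \<and> A * X = 1\<^sub>m (dim_row A) \<and> X * A = 1\<^sub>m (dim_row A)"
    then have X: "X \<in> carrier_mat N N" and AX: "A * X = 1\<^sub>m N" using A by auto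
    have "X = (Ai * A) * X" using AiA X by simp
    also have "\<dots> = Ai * (A * X)" using assoc_mult_mat[OF Ai A X] .
    also have "\<dots> = Ai" using AX Ai by simp
    finally show "X = Ai" .
  qed
  have AT: "transpose_mat A = A"
    unfolding A_def Bt_def Ct_def using transpose_add[OF BtB CtC] transpose_mult[OF Bt Bm] transpose_mult[OF Ct Cm]
    by (simp add: Bt_def Ct_def)
  have AiT: "transpose_mat Ai = Ai"
  proof -
    have Ait: "transpose_mat Ai \<in> carrier_mat N N" using Ai by simp
    have "transpose_mat Ai * A = 1\<^sub>m N"
      using arg_cong[OF AAi, of transpose_mat] transpose_mult[OF A Ai] AT by simp
    note AiTA = this
    have "transpose_mat Ai = transpose_mat Ai * (A * Ai)" using AAi Ait by simp
    also have "\<dots> = (transpose_mat Ai * A) * Ai" using assoc_mult_mat[OF Ait A Ai, symmetric] .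
    also have "\<dots> = Ai" using AiTA Ai by simp
    finally show ?thesis by simp
  qed
  define X where "X = Ai * Ct"
  have X: "X \<in> carrier_mat N s" using Ai Ct by (simp add: X_def)
  define Y where "Y = Bm * X"
  have Y: "Y \<in> carrier_mat r s" using Bm X by (simp add: Y_def)
  have CX: "Cm * X \<in> carrier_mat s s" using Cm X by simp
  have AX: "A * X = Ct" unfolding X_def using assoc_mult_mat[OF A Ai Ct, symmetric] AAi Ct by simp
  have "A * X = Bt * Y + Ct * (Cm * X)"
    unfolding A_def Y_def using add_mult_distrib_mat[OF BtB CtC X] assoc_mult_mat[OF Bt Bm X] assoc_mult_mat[OF Ct Cm X] by simp
  then have sum: "Bt * Y + Ct * (Cm * X) = Ct" using AX by simp
  have BtYc: "Bt * Y \<in> carrier_mat N s" and CCXc: "Ct * (Cm * X) \<in> carrier_mat N s" using Bt Y Ct CX by auto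
  have BZ: "Bm * (Bt * Y) = 0\<^sub>m r s"
  proof -
    have "Bm * (Bt * Y) + Bm * (Ct * (Cm * X)) = Bm * Ct"
      using mult_add_distrib_mat[OF Bm BtYc CCXc] sum by simp
    moreover have "Bm * (Ct * (Cm * X)) = 0\<^sub>m r s" using assoc_mult_mat[OF Bm Ct CX] BC left_mult_zero_mat[OF CX, of r] by (simp add: Ct_def)
    moreover have "Bm * (Bt * Y) \<in> carrier_mat r s" using Bm BtYc by simp
    ultimately show ?thesis using BC by (simp add: Ct_def)
  qed
  define Z where "Z = Bt * Y"
  have Z: "Z \<in> carrier_mat N s" using Bt Y by (simp add: Z_def)
  have ZT: "transpose_mat Z = transpose_mat Y * Bm" unfolding Z_def using transpose_mult[OF Bt Y] by (simp add: Bt_def)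
  have YT: "transpose_mat Y \<in> carrier_mat s r" using Y by simp
  have "transpose_mat Z * Z = transpose_mat Y * (Bm * Z)" using ZT assoc_mult_mat[OF YT Bm Z] by simp
  also have "\<dots> = 0\<^sub>m s s" using BZ YT by (simp add: Z_def)
  finally have "Z = 0\<^sub>m N s" using mat_TT_zero[OF Z] by simp
  have XT: "transpose_mat X \<in> carrier_mat s N" using X by simp
  have "transpose_mat Y = transpose_mat X * Bt" unfolding Y_def Bt_def using transpose_mult[OF Bm X] by simp
  then have "transpose_mat Y * Y = transpose_mat X * Z" using assoc_mult_mat[OF XT Bt Y] by (simp add: Z_def)
  also have "\<dots> = 0\<^sub>m s s" using \<open>Z = 0\<^sub>m N s\<close> XT by simp
  finally have Y0: "Y = 0\<^sub>m r s" using mat_TT_zero[OF Y] by simp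
  define K where "K = Bm * Ai"
  have K: "K \<in> carrier_mat r N" using Bm Ai by (simp add: K_def)
  have KCt: "K * Ct = 0\<^sub>m r s" using Y0 assoc_mult_mat[OF Bm Ai Ct] by (simp add: K_def Y_def X_def)
  have KT: "transpose_mat K = Ai * Bt" unfolding K_def using transpose_mult[OF Bm Ai] AiT by (simp add: Bt_def)
  have W: "Ai * Bt \<in> carrier_mat N r" using Ai Bt by simp
  have CW: "Cm * (Ai * Bt) = 0\<^sub>m s r"
  proof -
    have "transpose_mat (K * Ct) = Cm * transpose_mat K" using transpose_mult[OF K Ct] by (simp add: Ct_def)
    then show ?thesis using KCt KT by simp
  qed
  define S where "S = K * Bt"
  have S: "S \<in> carrier_mat r r" using K Bt by (simp add: S_def)
  have ST: "transpose_mat S = S"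
    unfolding S_def using transpose_mult[OF K Bt] KT assoc_mult_mat[OF Bm Ai Bt] by (simp add: Bt_def K_def)
  have BBW: "(Bt * Bm) * (Ai * Bt) = Bt"
  proof -
    have "A * (Ai * Bt) = Bt" using assoc_mult_mat[OF A Ai Bt, symmetric] AAi Bt by simp
    moreover have "A * (Ai * Bt) = (Bt * Bm) * (Ai * Bt) + (Ct * Cm) * (Ai * Bt)"
      unfolding A_def using add_mult_distrib_mat[OF BtB CtC W] .
    moreover have "(Ct * Cm) * (Ai * Bt) = 0\<^sub>m N r" using assoc_mult_mat[OF Ct Cm W] CW Ct by simp
    ultimately show ?thesis using BtB W by simp
  qed
  have SS: "S * S = S"
  proof -
    have KBt: "K * Bt \<in> carrier_mat r r" using K Bt by simp
    have "S * S = K * (Bt * (K * Bt))" unfolding S_def using assoc_mult_mat[OF K Bt KBt] .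
    also have "K * Bt = Bm * (Ai * Bt)" unfolding K_def using assoc_mult_mat[OF Bm Ai Bt] .
    also have "Bt * (Bm * (Ai * Bt)) = (Bt * Bm) * (Ai * Bt)" using assoc_mult_mat[OF Bt Bm W] by simp
    also have "\<dots> = Bt" by (rule BBW)
    finally show ?thesis by (simp add: S_def)
  qed
  have pS: "is_pinv S S" unfolding is_pinv_def using S SS ST by simp
  have "pinv S = S" unfolding pinv_def using pS pinv_unique by blast
  moreover have "mat_inv (transpose_mat Bm * Bm + transpose_mat Cm * Cm) = Ai" using inv by (simp add: A_def Bt_def Ct_def)
  ultimately show ?thesis by (simp add: S_def K_def Bt_def)
qed



lemma carriers:
  assumes "m = n * (n - 1)"
  shows "Bux n \<in> carrier_mat (n*n) m" "Bvy n \<in> carrier_mat (n*n) m"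
    "Bqx n \<in> carrier_mat m ((n-1)*(n-1))" "Bqy n \<in> carrier_mat m ((n-1)*(n-1))"
  using assms Bmat_carrier[of n]
  by (auto simp: Bux_def Bvy_def Bqx_def Bqy_def mult.commute)

lemma I1: "transpose_mat (Bux n) * Bvy n = Bqy n * transpose_mat (Bqx n)"
proof -
  have B: "Bmat n \<in> carrier_mat n (n-1)" by (rule Bmat_carrier)
  have Bt: "transpose_mat (Bmat n) \<in> carrier_mat (n-1) n" using B by simp
  have "transpose_mat (Bux n) * Bvy n = kron (1\<^sub>m n * Bmat n) (transpose_mat (Bmat n) * 1\<^sub>m n)"
    unfolding Bux_def Bvy_def kron_transpose transpose_one
    by (rule kron_mult[OF one_carrier_mat Bt B one_carrier_mat])
  also have "\<dots> = kron (Bmat n) (transpose_mat (Bmat n))" using B Bt by simp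
  also have "\<dots> = kron (Bmat n * 1\<^sub>m (n-1)) (1\<^sub>m (n-1) * transpose_mat (Bmat n))" using B Bt by simp
  also have "\<dots> = Bqy n * transpose_mat (Bqx n)"
    unfolding Bqy_def Bqx_def kron_transpose transpose_one
    by (rule kron_mult[OF B one_carrier_mat one_carrier_mat Bt, symmetric])
  finally show ?thesis .
qed

lemma I2: "Bux n * Bqy n = Bvy n * Bqx n"
proof -
  have B: "Bmat n \<in> carrier_mat n (n-1)" by (rule Bmat_carrier)
  have "Bux n * Bqy n = kron (1\<^sub>m n * Bmat n) (Bmat n * 1\<^sub>m (n-1))"
    unfolding Bux_def Bqy_def by (rule kron_mult[OF one_carrier_mat B B one_carrier_mat])
  also have "\<dots> = kron (Bmat n * 1\<^sub>m (n-1)) (1\<^sub>m n * Bmat n)" using B by simp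
  also have "\<dots> = Bvy n * Bqx n"
    unfolding Bvy_def Bqx_def by (rule kron_mult[OF B one_carrier_mat one_carrier_mat B, symmetric])
  finally show ?thesis .
qed

lemma Linv1: "kron (1\<^sub>m n) (Lm n) * Bux n = 1\<^sub>m (n * (n-1))"
  unfolding Bux_def
  by (subst kron_mult[OF one_carrier_mat Lm_carrier one_carrier_mat Bmat_carrier], simp add: Lm_Bmat kron_one)

lemma Linv2: "kron (Lm n) (1\<^sub>m n) * Bvy n = 1\<^sub>m (n * (n-1))"
  unfolding Bvy_def
  by (subst kron_mult[OF Lm_carrier one_carrier_mat Bmat_carrier one_carrier_mat], simp add: Lm_Bmat kron_one mult.commute)


lemma BC_zero:
  shows "BB n * transpose_mat (CC n) = 0\<^sub>m (n*n) ((n-1)*(n-1))"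
proof -
  define m where "m = n * (n - 1)"
  note c = carriers[OF m_def]
  have dd: "dim_col (Bux n) = dim_row (Bqy n)" "dim_col (Bvy n) = dim_row (Bqx n)" using c by auto
  have "BB n * transpose_mat (CC n) = (- Bux n) * transpose_mat (- transpose_mat (Bqy n)) + (- Bvy n) * transpose_mat (transpose_mat (Bqx n))"
    unfolding BB_def CC_def
    by (rule hcat_mult_transpose, insert c, auto)
  also have "(- Bux n) * transpose_mat (- transpose_mat (Bqy n)) = Bux n * Bqy n"
    using dd by (simp add: transpose_uminus)
  also have "(- Bvy n) * transpose_mat (transpose_mat (Bqx n)) = - (Bvy n * Bqx n)"
    using dd by simp
  also have "Bux n * Bqy n + - (Bvy n * Bqx n) = 0\<^sub>m (n*n) ((n-1)*(n-1))"
    unfolding I2 using c by (intro eq_matI, auto)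
  finally show ?thesis .
qed

lemma mult_mat_vec_zero: "(M :: real mat) \<in> carrier_mat a b \<Longrightarrow> M *\<^sub>v 0\<^sub>v b = 0\<^sub>v a"
  by (intro eq_vecI) (auto simp: mult_mat_vec_def)

lemma vec_zero_append: "0\<^sub>v a @\<^sub>v 0\<^sub>v b = (0\<^sub>v (a + b) :: real vec)"
  by (intro eq_vecI, auto)

lemma inj_BC:
  assumes v: "v \<in> carrier_vec (n*(n-1) + n*(n-1))"
    and Bv: "BB n *\<^sub>v v = 0\<^sub>v (n*n)" and Cv: "CC n *\<^sub>v v = 0\<^sub>v ((n-1)*(n-1))"
  shows "v = 0\<^sub>v (n*(n-1) + n*(n-1))"
proof -
  define m where "m = n * (n - 1)"
  note c = carriers[OF m_def]
  define u w where "u = vec_first v m" and "w = vec_last v m"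
  have u: "u \<in> carrier_vec m" and w: "w \<in> carrier_vec m" by (auto simp: u_def w_def)
  define a b cc d where "a = Bux n *\<^sub>v u" and "b = Bvy n *\<^sub>v w"
    and "cc = transpose_mat (Bqy n) *\<^sub>v u" and "d = transpose_mat (Bqx n) *\<^sub>v w"
  have a: "a \<in> carrier_vec (n*n)" and b: "b \<in> carrier_vec (n*n)"
    and cc: "cc \<in> carrier_vec ((n-1)*(n-1))" and d: "d \<in> carrier_vec ((n-1)*(n-1))"
    using c u w by (auto simp: a_def b_def cc_def d_def)
  have BBv: "BB n *\<^sub>v v = - a + - b"
    unfolding BB_def a_def b_def u_def w_def
    using hcat_mult_vec[of "- Bux n" "n*n" m "- Bvy n" m v] c v m_def by simp
  have CCv: "CC n *\<^sub>v v = - cc + d"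
    unfolding CC_def cc_def d_def u_def w_def
    using hcat_mult_vec[of "- transpose_mat (Bqy n)" "(n-1)*(n-1)" m "transpose_mat (Bqx n)" m v] c v m_def by simp
  have ab: "a \<bullet> b = cc \<bullet> d"
  proof -
    have "a \<bullet> b = b \<bullet> a" using a b by (rule comm_scalar_prod)
    also have "\<dots> = (transpose_mat (Bux n) *\<^sub>v b) \<bullet> u"
      unfolding a_def using transpose_vec_mult_scalar[OF c(1) u b] by simp
    also have "\<dots> = u \<bullet> (transpose_mat (Bux n) *\<^sub>v b)" using u c(1) b by (intro comm_scalar_prod[of _ m]) auto
    also have "transpose_mat (Bux n) *\<^sub>v b = (transpose_mat (Bux n) * Bvy n) *\<^sub>v w"
      unfolding b_def using c w by (subst assoc_mult_mat_vec[of _ m "n*n" _ m]) auto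
    also have "\<dots> = Bqy n *\<^sub>v (transpose_mat (Bqx n) *\<^sub>v w)"
      unfolding I1 using c w by (subst assoc_mult_mat_vec[of _ m "(n-1)*(n-1)" _ m]) auto
    also have "u \<bullet> \<dots> = cc \<bullet> d"
      unfolding cc_def d_def using transpose_vec_mult_scalar[OF c(4) d[unfolded d_def] u] by simp
    finally show ?thesis .
  qed
  have e1: "0 = - (a \<bullet> a) - a \<bullet> b"
  proof -
    have "0 = a \<bullet> (BB n *\<^sub>v v)" using Bv a by simp
    also have "\<dots> = a \<bullet> (- a) + a \<bullet> (- b)" unfolding BBv
      by (rule scalar_prod_add_distrib[of _ "n*n"], insert a b, auto)
    finally show ?thesis using a b by simp
  qed
  have e2: "0 = - (cc \<bullet> cc) + cc \<bullet> d"
  proof -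
    have "0 = cc \<bullet> (CC n *\<^sub>v v)" using Cv cc by simp
    also have "\<dots> = cc \<bullet> (- cc) + cc \<bullet> d" unfolding CCv
      by (rule scalar_prod_add_distrib[of _ "(n-1)*(n-1)"], insert cc d, auto)
    finally show ?thesis using cc d by simp
  qed
  have "a \<bullet> a + cc \<bullet> cc = 0" using e1 e2 ab by linarith
  then have "a \<bullet> a = 0" using vec_self_nonneg[of a] vec_self_nonneg[of cc] by linarith
  then have a0: "a = 0\<^sub>v (n*n)" using vec_self_zero[of a] a by auto
  have e3: "0 = - (b \<bullet> a) - b \<bullet> b"
  proof -
    have "0 = b \<bullet> (BB n *\<^sub>v v)" using Bv b by simp
    also have "\<dots> = b \<bullet> (- a) + b \<bullet> (- b)" unfolding BBv
      by (rule scalar_prod_add_distrib[of _ "n*n"], insert a b, auto)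
    finally show ?thesis using a b by simp
  qed
  then have "b \<bullet> b = 0" using a0 b by simp
  then have b0: "b = 0\<^sub>v (n*n)" using vec_self_zero[of b] b by auto
  have Lc1: "kron (1\<^sub>m n) (Lm n) \<in> carrier_mat m (n*n)" by (rule carrier_matI) (simp_all add: Lm_def m_def)
  have Lc2: "kron (Lm n) (1\<^sub>m n) \<in> carrier_mat m (n*n)" by (rule carrier_matI) (simp_all add: Lm_def m_def mult.commute)
  have "u = (kron (1\<^sub>m n) (Lm n) * Bux n) *\<^sub>v u" using Linv1[of n] u by (simp add: m_def)
  also have "\<dots> = kron (1\<^sub>m n) (Lm n) *\<^sub>v a" unfolding a_def using Lc1 c(1) u by simp
  also have "\<dots> = 0\<^sub>v m" using a0 mult_mat_vec_zero[OF Lc1] by simp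
  finally have u0: "u = 0\<^sub>v m" .
  have "w = (kron (Lm n) (1\<^sub>m n) * Bvy n) *\<^sub>v w" using Linv2[of n] w by (simp add: m_def)
  also have "\<dots> = kron (Lm n) (1\<^sub>m n) *\<^sub>v b" unfolding b_def using Lc2 c(2) w by simp
  also have "\<dots> = 0\<^sub>v m" using b0 mult_mat_vec_zero[OF Lc2] by simp
  finally have w0: "w = 0\<^sub>v m" .
  have "v = u @\<^sub>v w" unfolding u_def w_def using v m_def by simp
  then show ?thesis using u0 w0 vec_zero_append m_def by simp
qed


theorem corollary3:
  fixes n :: nat
  assumes "n \<ge> 2"
  shows "pinv (SN n) = SN n"
proof -
  define m where "m = n * (n - 1)"
  note c = carriers[OF m_def]
  have BBc: "BB n \<in> carrier_mat (n*n) (n*(n-1) + n*(n-1))"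
    using c by (intro carrier_matI) (auto simp: BB_def m_def)
  have CCc: "CC n \<in> carrier_mat ((n-1)*(n-1)) (n*(n-1) + n*(n-1))"
    using c by (intro carrier_matI) (auto simp: CC_def m_def)
  show ?thesis
    unfolding SN_def AN_def
    by (rule abstract_main[OF BBc CCc BC_zero inj_BC])
qed

end
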